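(* Let $(M,g)$ be a semi-regular semi-Riemannian manifold with Riemann curvature $R$. For all $X,Y,Z,T\in\mathfrak X(M)$: (1) $R(X,Y,Z,T)=-R(Y,X,Z,T)$; (2) $R(X,Y,Z,T)=-R(X,Y,T,Z)$; (3) $R(Y,Z,X,T)+R(Z,X,Y,T)+R(X,Y,Z,T)=0$; (4) $R(X,Y,Z,T)=R(Z,T,X,Y)$.
   Context: $(M,g)$: smooth manifold with smooth symmetric, possibly degenerate, bilinear form $g$ on $TM$ (variable signature allowed). $u^\flat(v)=g(u,v)$; $T^\bullet_pM=\{u^\flat:u\in T_pM\}$ with nondegenerate inner product $\langle\langle u^\flat,v^\flat\rangle\rangle=g(u,v)$; $\mathcal A^\bullet(M)$ = smooth $1$-forms valued in $T^\bullet_pM$. Koszul form $\mathcal K(X,Y,Z)=\tfrac12\{Xg(Y,Z)+Yg(Z,X)-Zg(X,Y)-g(X,[Y,Z])+g(Y,[Z,X])+g(Z,[X,Y])\}$; $\nabla^\flat_XY:=\mathcal K(X,Y,\cdot)$. If $\nabla^\flat_XY\in\mathcal A^\bullet(M)$ for all $X,Y$ (radical-stationary), define for $\omega\in\mathcal A^\bullet(M)$: $(\nabla_X\omega)(Y)=X(\omega(Y))-\langle\langle\nabla^\flat_XY,\omega\rangle\rangle$. $(M,g)$ is semi-regular if it is radical-stationary and $\nabla_Z(\nabla^\flat_XY)\in\mathcal A^\bullet(M)$ (in particular smooth) for all $X,Y,Z$. Riemann curvature: $R(X,Y,Z,T)=(\nabla_X(\nabla^\flat_YZ))(T)-(\nabla_Y(\nabla^\flat_XZ))(T)-(\nabla^\flat_{[X,Y]}Z)(T)$.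 *)

theory Defs
  imports "HOL-Analysis.Analysis"
begin

coinductive Cinf :: "'e::euclidean_space set \<Rightarrow> ('e \<Rightarrow> real) \<Rightarrow> bool" for S where
  Cinf_intro: "(\<forall>x\<in>S. f differentiable (at x)) \<Longrightarrow>
     (\<forall>v. Cinf S (\<lambda>x. frechet_derivative f (at x) v)) \<Longrightarrow> Cinf S f"

definition Cinf_map :: "'e::euclidean_space set \<Rightarrow> ('e \<Rightarrow> 'e) \<Rightarrow> bool" where
  "Cinf_map S F \<longleftrightarrow> (\<forall>b\<in>Basis. Cinf S (\<lambda>x. F x \<bullet> b))"

definition smooth_manifold ::
  "'p topology \<Rightarrow> ('p set \<times> ('p \<Rightarrow> 'e::euclidean_space)) set \<Rightarrow> bool" where
  "smooth_manifold MT A \<longleftrightarrow>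
     Hausdorff_space MT \<and> second_countable MT \<and> topspace MT = \<Union>(fst ` A) \<and>
     (\<forall>(U,\<phi>)\<in>A. openin MT U \<and> open (\<phi> ` U) \<and>
        homeomorphic_map (subtopology MT U) (top_of_set (\<phi> ` U)) \<phi>) \<and>
     (\<forall>(U,\<phi>)\<in>A. \<forall>(V,\<psi>)\<in>A. Cinf_map (\<phi> ` (U \<inter> V)) (\<psi> \<circ> inv_into U \<phi>))"

text \<open>Smooth real functions on M (made extensional: zero outside M).\<close>
definition smooth_fun ::
  "'p topology \<Rightarrow> ('p set \<times> ('p \<Rightarrow> 'e::euclidean_space)) set \<Rightarrow> ('p \<Rightarrow> real) \<Rightarrow> bool" where
  "smooth_fun MT A f \<longleftrightarrow> (\<forall>p. p \<notin> topspace MT \<longrightarrow> f p = 0) \<and>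
     (\<forall>(U,\<phi>)\<in>A. Cinf (\<phi> ` U) (f \<circ> inv_into U \<phi>))"

type_synonym 'p vfield = "('p \<Rightarrow> real) \<Rightarrow> ('p \<Rightarrow> real)"

text \<open>Smooth vector fields, as derivations of the algebra of smooth functions
  (made extensional: zero on non-smooth arguments).\<close>
definition vector_field ::
  "'p topology \<Rightarrow> ('p set \<times> ('p \<Rightarrow> 'e::euclidean_space)) set \<Rightarrow> 'p vfield \<Rightarrow> bool" where
  "vector_field MT A X \<longleftrightarrow>
     (\<forall>f. \<not> smooth_fun MT A f \<longrightarrow> X f = (\<lambda>_. 0)) \<and>
     (\<forall>f. smooth_fun MT A f \<longrightarrow> smooth_fun MT A (X f)) \<and>
     (\<forall>f h a b. smooth_fun MT A f \<and> smooth_fun MT A h \<longrightarrow>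
        X (\<lambda>p. a * f p + b * h p) = (\<lambda>p. a * X f p + b * X h p)) \<and>
     (\<forall>f h. smooth_fun MT A f \<and> smooth_fun MT A h \<longrightarrow>
        X (\<lambda>p. f p * h p) = (\<lambda>p. f p * X h p + h p * X f p))"

definition vf_comb :: "('p \<Rightarrow> real) \<Rightarrow> 'p vfield \<Rightarrow> ('p \<Rightarrow> real) \<Rightarrow> 'p vfield \<Rightarrow> 'p vfield" where
  "vf_comb f X h Y = (\<lambda>u p. f p * X u p + h p * Y u p)"

definition lie :: "'p vfield \<Rightarrow> 'p vfield \<Rightarrow> 'p vfield" where
  "lie X Y = (\<lambda>u p. X (Y u) p - Y (X u) p)"

text \<open>A smooth symmetric, possibly degenerate, bilinear form on TM, given as a
  symmetric C-infinity(M)-bilinear map from pairs of vector fields to smooth functions.\<close>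
definition sym_bilinear_form ::
  "'p topology \<Rightarrow> ('p set \<times> ('p \<Rightarrow> 'e::euclidean_space)) set \<Rightarrow>
   ('p vfield \<Rightarrow> 'p vfield \<Rightarrow> 'p \<Rightarrow> real) \<Rightarrow> bool" where
  "sym_bilinear_form MT A g \<longleftrightarrow>
     (\<forall>X Y. vector_field MT A X \<and> vector_field MT A Y \<longrightarrow>
        smooth_fun MT A (g X Y) \<and> g X Y = g Y X) \<and>
     (\<forall>X Y Z f h. vector_field MT A X \<and> vector_field MT A Y \<and> vector_field MT A Z \<and>
        smooth_fun MT A f \<and> smooth_fun MT A h \<longrightarrow>
        g (vf_comb f X h Y) Z = (\<lambda>p. f p * g X Z p + h p * g Y Z p))"

text \<open>Koszul form; nabla-flat_X Y := K(X,Y,.)\<close>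
definition koszul ::
  "('p vfield \<Rightarrow> 'p vfield \<Rightarrow> 'p \<Rightarrow> real) \<Rightarrow> 'p vfield \<Rightarrow> 'p vfield \<Rightarrow> 'p vfield \<Rightarrow> 'p \<Rightarrow> real" where
  "koszul g X Y Z = (\<lambda>p. (1/2) * (X (g Y Z) p + Y (g Z X) p - Z (g X Y) p
      - g X (lie Y Z) p + g Y (lie Z X) p + g Z (lie X Y) p))"

text \<open>A 1-form (a map from vector fields to functions) lies in A-bullet(M): it is
  smooth, C-infinity(M)-linear, and at each point p its value is u-flat for some
  tangent vector u at p (represented as the value at p of a vector field).\<close>
definition Abullet ::
  "'p topology \<Rightarrow> ('p set \<times> ('p \<Rightarrow> 'e::euclidean_space)) set \<Rightarrow>
   ('p vfield \<Rightarrow> 'p vfield \<Rightarrow> 'p \<Rightarrow> real) \<Rightarrow> ('p vfield \<Rightarrow> 'p \<Rightarrow> real) \<Rightarrow> bool" where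
  "Abullet MT A g \<omega> \<longleftrightarrow>
     (\<forall>Z. vector_field MT A Z \<longrightarrow> smooth_fun MT A (\<omega> Z)) \<and>
     (\<forall>Z W f h. vector_field MT A Z \<and> vector_field MT A W \<and>
        smooth_fun MT A f \<and> smooth_fun MT A h \<longrightarrow>
        \<omega> (vf_comb f Z h W) = (\<lambda>p. f p * \<omega> Z p + h p * \<omega> W p)) \<and>
     (\<forall>p\<in>topspace MT. \<exists>U. vector_field MT A U \<and>
        (\<forall>Z. vector_field MT A Z \<longrightarrow> \<omega> Z p = g U Z p))"

definition flat_rep ::
  "'p topology \<Rightarrow> ('p set \<times> ('p \<Rightarrow> 'e::euclidean_space)) set \<Rightarrow>
   ('p vfield \<Rightarrow> 'p vfield \<Rightarrow> 'p \<Rightarrow> real) \<Rightarrow> ('p vfield \<Rightarrow> 'p \<Rightarrow> real) \<Rightarrow> 'p \<Rightarrow> 'p vfield" where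
  "flat_rep MT A g \<omega> p = (SOME U. vector_field MT A U \<and>
      (\<forall>Z. vector_field MT A Z \<longrightarrow> \<omega> Z p = g U Z p))"

text \<open>The inner product on T-bullet: << u-flat, v-flat >> = g(u,v), pointwise.\<close>
definition bullet_inner ::
  "'p topology \<Rightarrow> ('p set \<times> ('p \<Rightarrow> 'e::euclidean_space)) set \<Rightarrow>
   ('p vfield \<Rightarrow> 'p vfield \<Rightarrow> 'p \<Rightarrow> real) \<Rightarrow> ('p vfield \<Rightarrow> 'p \<Rightarrow> real) \<Rightarrow>
   ('p vfield \<Rightarrow> 'p \<Rightarrow> real) \<Rightarrow> 'p \<Rightarrow> real" where
  "bullet_inner MT A g \<omega> \<tau> = (\<lambda>p. if p \<in> topspace MT
      then g (flat_rep MT A g \<omega> p) (flat_rep MT A g \<tau> p) p else 0)"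

definition nabla_form ::
  "'p topology \<Rightarrow> ('p set \<times> ('p \<Rightarrow> 'e::euclidean_space)) set \<Rightarrow>
   ('p vfield \<Rightarrow> 'p vfield \<Rightarrow> 'p \<Rightarrow> real) \<Rightarrow> 'p vfield \<Rightarrow> ('p vfield \<Rightarrow> 'p \<Rightarrow> real) \<Rightarrow>
   'p vfield \<Rightarrow> 'p \<Rightarrow> real" where
  "nabla_form MT A g X \<omega> Y = (\<lambda>p. X (\<omega> Y) p - bullet_inner MT A g (koszul g X Y) \<omega> p)"

definition radical_stationary ::
  "'p topology \<Rightarrow> ('p set \<times> ('p \<Rightarrow> 'e::euclidean_space)) set \<Rightarrow>
   ('p vfield \<Rightarrow> 'p vfield \<Rightarrow> 'p \<Rightarrow> real) \<Rightarrow> bool" where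
  "radical_stationary MT A g \<longleftrightarrow>
     (\<forall>X Y. vector_field MT A X \<and> vector_field MT A Y \<longrightarrow> Abullet MT A g (koszul g X Y))"

definition semi_regular ::
  "'p topology \<Rightarrow> ('p set \<times> ('p \<Rightarrow> 'e::euclidean_space)) set \<Rightarrow>
   ('p vfield \<Rightarrow> 'p vfield \<Rightarrow> 'p \<Rightarrow> real) \<Rightarrow> bool" where
  "semi_regular MT A g \<longleftrightarrow> radical_stationary MT A g \<and>
     (\<forall>X Y Z. vector_field MT A X \<and> vector_field MT A Y \<and> vector_field MT A Z \<longrightarrow>
        Abullet MT A g (nabla_form MT A g Z (koszul g X Y)))"

definition riemann ::
  "'p topology \<Rightarrow> ('p set \<times> ('p \<Rightarrow> 'e::euclidean_space)) set \<Rightarrow>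
   ('p vfield \<Rightarrow> 'p vfield \<Rightarrow> 'p \<Rightarrow> real) \<Rightarrow> 'p vfield \<Rightarrow> 'p vfield \<Rightarrow> 'p vfield \<Rightarrow> 'p vfield \<Rightarrow> 'p \<Rightarrow> real" where
  "riemann MT A g X Y Z T = (\<lambda>p. nabla_form MT A g X (koszul g Y Z) T p
      - nabla_form MT A g Y (koszul g X Z) T p - koszul g (lie X Y) Z T p)"

end

theory Submission
  imports Defs
begin


inductive Cc :: "'e::euclidean_space set \<Rightarrow> ('e \<Rightarrow> real) \<Rightarrow> bool" for S where
  Cc_base: "Cinf S f \<Longrightarrow> Cc S f"
| Cc_add: "Cc S f \<Longrightarrow> Cc S h \<Longrightarrow> Cc S (\<lambda>x. f x + h x)"
| Cc_mult: "Cc S f \<Longrightarrow> Cc S h \<Longrightarrow> Cc S (\<lambda>x. f x * h x)"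
| Cc_cong: "Cc S f \<Longrightarrow> (\<forall>x\<in>S. h x = f x) \<Longrightarrow> Cc S h"

lemma Cc_step:
  assumes "open S" "Cc S f"
  shows "(\<forall>x\<in>S. f differentiable (at x)) \<and> (\<forall>v. Cc S (\<lambda>x. frechet_derivative f (at x) v))"
  using assms(2)
proof induction
  case (Cc_base f)
  then show ?case by (auto elim: Cinf.cases intro: Cc.Cc_base)
next
  case (Cc_add f h)
  have d: "\<forall>x\<in>S. (\<lambda>x. f x + h x) differentiable (at x)" using Cc_add.IH by (simp add: differentiable_add)
  have "frechet_derivative (\<lambda>x. f x + h x) (at x) v
      = frechet_derivative f (at x) v + frechet_derivative h (at x) v" if "x \<in> S" for x v
  proof -
    have "((\<lambda>x. f x + h x) has_derivative (\<lambda>v. frechet_derivative f (at x) v + frechet_derivative h (at x) v)) (at x)"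
      using Cc_add that by (intro has_derivative_add) (auto simp: frechet_derivative_works[symmetric])
    from frechet_derivative_at[OF this, symmetric] show ?thesis by simp
  qed
  note e = this
  show ?case
  proof (intro conjI allI d)
    fix v
    have "Cc S (\<lambda>x. frechet_derivative f (at x) v + frechet_derivative h (at x) v)"
      using Cc_add.IH by (intro Cc.Cc_add) blast+
    then show "Cc S (\<lambda>x. frechet_derivative (\<lambda>x. f x + h x) (at x) v)"
      by (rule Cc.Cc_cong) (use e in blast)
  qed
next
  case (Cc_mult f h)
  have d: "\<forall>x\<in>S. (\<lambda>x. f x * h x) differentiable (at x)" using Cc_mult.IH by (simp add: differentiable_mult)
  have "frechet_derivative (\<lambda>x. f x * h x) (at x) v
      = f x * frechet_derivative h (at x) v + frechet_derivative f (at x) v * h x" if "x \<in> S" for x v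
  proof -
    have "((\<lambda>x. f x * h x) has_derivative (\<lambda>v. f x * frechet_derivative h (at x) v + frechet_derivative f (at x) v * h x)) (at x)"
      using Cc_mult that by (intro has_derivative_mult) (auto simp: frechet_derivative_works[symmetric])
    from frechet_derivative_at[OF this, symmetric] show ?thesis by simp
  qed
  note e = this
  show ?case
  proof (intro conjI allI d)
    fix v
    have "Cc S (\<lambda>x. f x * frechet_derivative h (at x) v + frechet_derivative f (at x) v * h x)"
      using Cc_mult.IH Cc_mult.hyps by (intro Cc.Cc_add Cc.Cc_mult) blast+
    then show "Cc S (\<lambda>x. frechet_derivative (\<lambda>x. f x * h x) (at x) v)"
      by (rule Cc.Cc_cong) (use e in blast)
  qed
next
  case (Cc_cong f h)
  have fd: "\<forall>x\<in>S. f differentiable (at x)" and fC: "\<forall>v. Cc S (\<lambda>x. frechet_derivative f (at x) v)"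
    using Cc_cong.IH by blast+
  have eq: "\<forall>x\<in>S. h x = f x" by (fact Cc_cong.hyps(2))
  have hd: "(h has_derivative frechet_derivative f (at x)) (at x)" if "x \<in> S" for x
  proof (rule has_derivative_transform_within_open[of f _ x UNIV S])
    show "(f has_derivative frechet_derivative f (at x)) (at x)"
      using fd that frechet_derivative_works by blast
  qed (use assms(1) that eq in auto)
  have d: "\<forall>x\<in>S. h differentiable (at x)" using hd by (auto simp: differentiable_def)
  have e: "\<forall>x\<in>S. frechet_derivative h (at x) v = frechet_derivative f (at x) v" for v
    using frechet_derivative_at[OF hd, symmetric] by simp
  have "Cc S (\<lambda>x. frechet_derivative h (at x) v)" for v
    by (rule Cc.Cc_cong[of _ "\<lambda>x. frechet_derivative f (at x) v"]) (use fC e in blast)+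
  with d show ?case by blast
qed

lemma Cc_Cinf: assumes "open S" "Cc S f" shows "Cinf S f"
  using assms(2)
proof (coinduction arbitrary: f rule: Cinf.coinduct)
  case (Cinf f)
  then show ?case using Cc_step[OF assms(1)] by blast
qed

lemma Cinf_const: "Cinf S (\<lambda>x. c)"
proof (coinduction arbitrary: c rule: Cinf.coinduct)
  case (Cinf c)
  have "frechet_derivative (\<lambda>x. c) (at x) = (\<lambda>v. 0)" for x :: 'a
    using frechet_derivative_at[OF has_derivative_const, symmetric] by simp
  then show ?case by auto
qed




locale SR =
  fixes MT :: "'p topology" and A :: "('p set \<times> ('p \<Rightarrow> 'e::euclidean_space)) set"
    and g :: "'p vfield \<Rightarrow> 'p vfield \<Rightarrow> 'p \<Rightarrow> real"
  assumes man: "smooth_manifold MT A" and sb: "sym_bilinear_form MT A g"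
    and sr: "semi_regular MT A g"
begin

abbreviation "VF \<equiv> vector_field MT A"
abbreviation "SF \<equiv> smooth_fun MT A"
abbreviation "K \<equiv> koszul g"
abbreviation "BI \<equiv> bullet_inner MT A g"
abbreviation "AB \<equiv> Abullet MT A g"

definition oneM :: "'p \<Rightarrow> real" where "oneM p = (if p \<in> topspace MT then 1 else 0)"

lemma chart: "(U,\<phi>) \<in> A \<Longrightarrow> open (\<phi> ` U) \<and> U \<subseteq> topspace MT"
  using man unfolding smooth_manifold_def by (auto dest: openin_subset)

lemma SF_off: "SF f \<Longrightarrow> p \<notin> topspace MT \<Longrightarrow> f p = 0"
  unfolding smooth_fun_def by blast

lemma SF_comb: assumes "SF f" "SF h" shows "SF (\<lambda>p. a * f p + b * h p)"
  unfolding smooth_fun_def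
proof (intro conjI allI impI ballI)
  fix p assume "p \<notin> topspace MT" then show "a * f p + b * h p = 0" using SF_off[OF assms(1)] SF_off[OF assms(2)] by simp
next
  fix x assume x: "x \<in> A"
  obtain U \<phi> where xe: "x = (U,\<phi>)" by force
  have o: "open (\<phi> ` U)" using chart x xe by blast
  have cf: "Cinf (\<phi> ` U) (f \<circ> inv_into U \<phi>)" "Cinf (\<phi> ` U) (h \<circ> inv_into U \<phi>)"
    using assms x xe unfolding smooth_fun_def by auto
  have "Cc (\<phi> ` U) (\<lambda>y. (\<lambda>_. a) y * (f \<circ> inv_into U \<phi>) y + (\<lambda>_. b) y * (h \<circ> inv_into U \<phi>) y)"
    using cf by (intro Cc_add Cc_mult Cc_base Cinf_const)
  then have "Cinf (\<phi> ` U) ((\<lambda>p. a * f p + b * h p) \<circ> inv_into U \<phi>)"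
    using Cc_Cinf[OF o] by (simp add: o_def)
  then show "case x of (U, \<phi>) \<Rightarrow> Cinf (\<phi> ` U) ((\<lambda>p. a * f p + b * h p) \<circ> inv_into U \<phi>)"
    using xe by simp
qed

lemma SF_mult: assumes "SF f" "SF h" shows "SF (\<lambda>p. f p * h p)"
  unfolding smooth_fun_def
proof (intro conjI allI impI ballI)
  fix p assume "p \<notin> topspace MT" then show "f p * h p = 0" using SF_off[OF assms(1)] by simp
next
  fix x assume x: "x \<in> A"
  obtain U \<phi> where xe: "x = (U,\<phi>)" by force
  have o: "open (\<phi> ` U)" using chart x xe by blast
  have cf: "Cinf (\<phi> ` U) (f \<circ> inv_into U \<phi>)" "Cinf (\<phi> ` U) (h \<circ> inv_into U \<phi>)"
    using assms x xe unfolding smooth_fun_def by auto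
  have "Cc (\<phi> ` U) (\<lambda>y. (f \<circ> inv_into U \<phi>) y * (h \<circ> inv_into U \<phi>) y)"
    using cf by (intro Cc_mult Cc_base)
  then have "Cinf (\<phi> ` U) ((\<lambda>p. f p * h p) \<circ> inv_into U \<phi>)"
    using Cc_Cinf[OF o] by (simp add: o_def)
  then show "case x of (U, \<phi>) \<Rightarrow> Cinf (\<phi> ` U) ((\<lambda>p. f p * h p) \<circ> inv_into U \<phi>)"
    using xe by simp
qed

lemma SF_zero: "SF (\<lambda>_. 0)"
  unfolding smooth_fun_def by (auto simp: o_def Cinf_const)

lemma SF_one: "SF oneM"
  unfolding smooth_fun_def
proof (intro conjI allI impI ballI)
  fix p assume "p \<notin> topspace MT" then show "oneM p = 0" by (simp add: oneM_def)
next
  fix x assume x: "x \<in> A"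
  obtain U \<phi> where xe: "x = (U,\<phi>)" by force
  have o: "open (\<phi> ` U)" and sub: "U \<subseteq> topspace MT" using chart x xe by blast+
  have "Cc (\<phi> ` U) (\<lambda>_. 1)" by (intro Cc_base Cinf_const)
  moreover have "\<forall>y\<in>\<phi> ` U. (oneM \<circ> inv_into U \<phi>) y = 1"
  proof
    fix y assume "y \<in> \<phi> ` U"
    then have "inv_into U \<phi> y \<in> U" by (rule inv_into_into)
    then show "(oneM \<circ> inv_into U \<phi>) y = 1" using sub by (auto simp: oneM_def)
  qed
  ultimately have "Cc (\<phi> ` U) (oneM \<circ> inv_into U \<phi>)" by (rule Cc_cong)
  then have "Cinf (\<phi> ` U) (oneM \<circ> inv_into U \<phi>)" by (rule Cc_Cinf[OF o])
  then show "case x of (U, \<phi>) \<Rightarrow> Cinf (\<phi> ` U) (oneM \<circ> inv_into U \<phi>)"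
    using xe by simp
qed

lemma SF_diff: assumes "SF f" "SF h" shows "SF (\<lambda>p. f p - h p)"
  using SF_comb[OF assms, of 1 "-1"] by simp

lemma SF_add: assumes "SF f" "SF h" shows "SF (\<lambda>p. f p + h p)"
  using SF_comb[OF assms, of 1 1] by simp

lemma vf_smooth: "VF X \<Longrightarrow> SF f \<Longrightarrow> SF (X f)"
  unfolding vector_field_def by blast
lemma vf_ns: "VF X \<Longrightarrow> \<not> SF f \<Longrightarrow> X f = (\<lambda>_. 0)"
  unfolding vector_field_def by blast
lemma vf_lin: "VF X \<Longrightarrow> SF f \<Longrightarrow> SF h \<Longrightarrow> X (\<lambda>p. a * f p + b * h p) = (\<lambda>p. a * X f p + b * X h p)"
  unfolding vector_field_def by blast
lemma vf_leib: "VF X \<Longrightarrow> SF f \<Longrightarrow> SF h \<Longrightarrow> X (\<lambda>p. f p * h p) = (\<lambda>p. f p * X h p + h p * X f p)"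
  unfolding vector_field_def by blast

lemma vf_zero: assumes X: "VF X" shows "X (\<lambda>_. 0) = (\<lambda>_. 0)"
proof -
  have "X (\<lambda>p. 0 * (\<lambda>_. 0) p + 0 * (\<lambda>_. 0) p) = (\<lambda>p. 0 * X (\<lambda>_. 0) p + 0 * X (\<lambda>_. 0) p)"
    by (rule vf_lin[OF X SF_zero SF_zero])
  then show ?thesis by simp
qed
lemma vf_add: assumes "VF X" "SF f" "SF h" shows "X (\<lambda>p. f p + h p) = (\<lambda>p. X f p + X h p)"
proof -
  have "X (\<lambda>p. 1 * f p + 1 * h p) = (\<lambda>p. 1 * X f p + 1 * X h p)" by (rule vf_lin[OF assms])
  then show ?thesis by simp
qed
lemma vf_diff: assumes "VF X" "SF f" "SF h" shows "X (\<lambda>p. f p - h p) = (\<lambda>p. X f p - X h p)"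
proof -
  have "X (\<lambda>p. 1 * f p + (-1) * h p) = (\<lambda>p. 1 * X f p + (-1) * X h p)" by (rule vf_lin[OF assms])
  then show ?thesis by simp
qed
lemma vf_neg: assumes "VF X" "SF f" shows "X (\<lambda>p. - f p) = (\<lambda>p. - X f p)"
proof -
  have "X (\<lambda>p. (-1) * f p + 0 * f p) = (\<lambda>p. (-1) * X f p + 0 * X f p)" by (rule vf_lin[OF assms assms(2)])
  then show ?thesis by simp
qed
lemma vf_off: assumes X: "VF X" and p: "p \<notin> topspace MT" shows "X u p = 0"
proof (cases "SF u")
  case True then show ?thesis using SF_off[OF vf_smooth[OF X True] p] by simp
next
  case False then show ?thesis using vf_ns[OF X False] by simp
qed

lemma lie_vf: assumes X: "VF X" and Y: "VF Y" shows "VF (lie X Y)"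
  unfolding vector_field_def
proof (intro conjI allI impI)
  fix f assume nf: "\<not> SF f" show "lie X Y f = (\<lambda>_. 0)"
    using vf_ns[OF X nf] vf_ns[OF Y nf] vf_zero[OF X] vf_zero[OF Y] by (simp add: lie_def)
next
  fix f assume f: "SF f" show "SF (lie X Y f)"
    unfolding lie_def by (rule SF_diff[OF vf_smooth[OF X vf_smooth[OF Y f]] vf_smooth[OF Y vf_smooth[OF X f]]])
next
  fix f h a b assume fh: "SF f \<and> SF h"
  then have f: "SF f" and h: "SF h" by auto
  have 1: "X (Y (\<lambda>p. a * f p + b * h p)) = (\<lambda>p. a * X (Y f) p + b * X (Y h) p)"
    unfolding vf_lin[OF Y f h] by (rule vf_lin[OF X vf_smooth[OF Y f] vf_smooth[OF Y h]])
  have 2: "Y (X (\<lambda>p. a * f p + b * h p)) = (\<lambda>p. a * Y (X f) p + b * Y (X h) p)"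
    unfolding vf_lin[OF X f h] by (rule vf_lin[OF Y vf_smooth[OF X f] vf_smooth[OF X h]])
  show "lie X Y (\<lambda>p. a * f p + b * h p) = (\<lambda>p. a * lie X Y f p + b * lie X Y h p)"
    unfolding lie_def 1 2 by (simp add: algebra_simps)
next
  fix f h assume fh: "SF f \<and> SF h"
  then have f: "SF f" and h: "SF h" by auto
  have s1: "SF (\<lambda>p. f p * Y h p)" "SF (\<lambda>p. h p * Y f p)"
    by (rule SF_mult[OF f vf_smooth[OF Y h]], rule SF_mult[OF h vf_smooth[OF Y f]])
  have s2: "SF (\<lambda>p. f p * X h p)" "SF (\<lambda>p. h p * X f p)"
    by (rule SF_mult[OF f vf_smooth[OF X h]], rule SF_mult[OF h vf_smooth[OF X f]])
  have "X (Y (\<lambda>p. f p * h p)) = X (\<lambda>p. f p * Y h p + h p * Y f p)"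
    by (simp only: vf_leib[OF Y f h])
  also have "\<dots> = (\<lambda>p. X (\<lambda>p. f p * Y h p) p + X (\<lambda>p. h p * Y f p) p)"
    by (rule vf_add[OF X s1])
  also have "\<dots> = (\<lambda>p. f p * X (Y h) p + Y h p * X f p + (h p * X (Y f) p + Y f p * X h p))"
    by (simp only: vf_leib[OF X f vf_smooth[OF Y h]] vf_leib[OF X h vf_smooth[OF Y f]])
  finally have 1: "X (Y (\<lambda>p. f p * h p)) = \<dots>" .
  have "Y (X (\<lambda>p. f p * h p)) = Y (\<lambda>p. f p * X h p + h p * X f p)"
    by (simp only: vf_leib[OF X f h])
  also have "\<dots> = (\<lambda>p. Y (\<lambda>p. f p * X h p) p + Y (\<lambda>p. h p * X f p) p)"
    by (rule vf_add[OF Y s2])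
  also have "\<dots> = (\<lambda>p. f p * Y (X h) p + X h p * Y f p + (h p * Y (X f) p + X f p * Y h p))"
    by (simp only: vf_leib[OF Y f vf_smooth[OF X h]] vf_leib[OF Y h vf_smooth[OF X f]])
  finally have 2: "Y (X (\<lambda>p. f p * h p)) = \<dots>" .
  show "lie X Y (\<lambda>p. f p * h p) = (\<lambda>p. f p * lie X Y h p + h p * lie X Y f p)"
    unfolding lie_def 1 2 by (simp add: algebra_simps)
qed

lemma vf_plus: assumes X: "VF X" and Y: "VF Y" shows "VF (\<lambda>u p. X u p + Y u p)"
  unfolding vector_field_def
proof (intro conjI allI impI)
  fix f assume nf: "\<not> SF f" show "(\<lambda>p. X f p + Y f p) = (\<lambda>_. 0)"
    using vf_ns[OF X nf] vf_ns[OF Y nf] by simp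
next
  fix f assume f: "SF f" show "SF (\<lambda>p. X f p + Y f p)"
    by (rule SF_add[OF vf_smooth[OF X f] vf_smooth[OF Y f]])
next
  fix f h a b assume fh: "SF f \<and> SF h"
  then have f: "SF f" and h: "SF h" by auto
  show "(\<lambda>p. X (\<lambda>p. a * f p + b * h p) p + Y (\<lambda>p. a * f p + b * h p) p) = (\<lambda>p. a * (X f p + Y f p) + b * (X h p + Y h p))"
    unfolding vf_lin[OF X f h] vf_lin[OF Y f h] by (simp add: algebra_simps)
next
  fix f h assume fh: "SF f \<and> SF h"
  then have f: "SF f" and h: "SF h" by auto
  show "(\<lambda>p. X (\<lambda>p. f p * h p) p + Y (\<lambda>p. f p * h p) p) = (\<lambda>p. f p * (X h p + Y h p) + h p * (X f p + Y f p))"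
    unfolding vf_leib[OF X f h] vf_leib[OF Y f h] by (simp add: algebra_simps)
qed

end



context SR begin

lemma g_sym: "VF X \<Longrightarrow> VF Y \<Longrightarrow> g X Y = g Y X"
  using sb unfolding sym_bilinear_form_def by blast
lemma g_smooth: "VF X \<Longrightarrow> VF Y \<Longrightarrow> SF (g X Y)"
  using sb unfolding sym_bilinear_form_def by blast
lemma g_comb: "VF X \<Longrightarrow> VF Y \<Longrightarrow> VF Z \<Longrightarrow> SF f \<Longrightarrow> SF h \<Longrightarrow>
    g (vf_comb f X h Y) Z = (\<lambda>p. f p * g X Z p + h p * g Y Z p)"
  using sb unfolding sym_bilinear_form_def by blast

lemma g_add1: assumes W: "VF W" and V: "VF V" and Z: "VF Z"
  shows "g (\<lambda>u p. W u p + V u p) Z = (\<lambda>p. g W Z p + g V Z p)"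
proof -
  have e: "vf_comb oneM W oneM V = (\<lambda>u p. W u p + V u p)"
  proof (intro ext)
    fix u p show "vf_comb oneM W oneM V u p = W u p + V u p"
    proof (cases "p \<in> topspace MT")
      case True then show ?thesis by (simp add: vf_comb_def oneM_def)
    next
      case False then show ?thesis using vf_off[OF W False, of u] vf_off[OF V False, of u]
        by (simp add: vf_comb_def oneM_def)
    qed
  qed
  have "g (vf_comb oneM W oneM V) Z = (\<lambda>p. oneM p * g W Z p + oneM p * g V Z p)"
    by (rule g_comb[OF W V Z SF_one SF_one])
  also have "\<dots> = (\<lambda>p. g W Z p + g V Z p)"
  proof (intro ext)
    fix p show "oneM p * g W Z p + oneM p * g V Z p = g W Z p + g V Z p"
    proof (cases "p \<in> topspace MT")
      case True then show ?thesis by (simp add: oneM_def)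
    next
      case False then show ?thesis
        using SF_off[OF g_smooth[OF W Z] False] SF_off[OF g_smooth[OF V Z] False]
        by (simp add: oneM_def)
    qed
  qed
  finally show ?thesis unfolding e .
qed

lemma g_zero1: assumes Z: "VF Z" shows "g (\<lambda>u p. 0) Z = (\<lambda>p. 0)"
proof -
  have e: "vf_comb (\<lambda>_. 0) Z (\<lambda>_. 0) Z = (\<lambda>u p. 0)" by (simp add: vf_comb_def)
  have "g (vf_comb (\<lambda>_. 0) Z (\<lambda>_. 0) Z) Z = (\<lambda>p. (\<lambda>_. 0) p * g Z Z p + (\<lambda>_. 0) p * g Z Z p)"
    by (rule g_comb[OF Z Z Z SF_zero SF_zero])
  then show ?thesis unfolding e by simp
qed

lemma g_neg1: assumes W: "VF W" and W': "VF W'" and Z: "VF Z" and n: "\<And>u p. W' u p = - W u p"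
  shows "g W' Z = (\<lambda>p. - g W Z p)"
proof -
  have e: "(\<lambda>u p. W' u p + W u p) = (\<lambda>u p. 0)" using n by simp
  have "(\<lambda>p. g W' Z p + g W Z p) = (\<lambda>p. 0)"
    using g_add1[OF W' W Z] g_zero1[OF Z] unfolding e by simp
  then have "\<And>p. g W' Z p + g W Z p = 0" by (metis (mono_tags))
  then show ?thesis by (intro ext) (simp add: eq_neg_iff_add_eq_0)
qed

lemma lie_anti: "lie Y X u p = - lie X Y u p"
  by (simp add: lie_def)

lemma g_rewr: assumes X: "VF X" and Y: "VF Y" and Z: "VF Z"
  shows "g Z Y = g Y Z" "g Y X = g X Y" "g X Z = g Z X"
    "g X (lie Y Z) = g (lie Y Z) X" "g X (lie Z Y) = (\<lambda>p. - g (lie Y Z) X p)"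
    "g Y (lie Z X) = g (lie Z X) Y" "g Y (lie X Z) = (\<lambda>p. - g (lie Z X) Y p)"
    "g Z (lie X Y) = g (lie X Y) Z" "g Z (lie Y X) = (\<lambda>p. - g (lie X Y) Z p)"
proof -
  note L = lie_vf
  show "g Z Y = g Y Z" "g Y X = g X Y" "g X Z = g Z X" using g_sym X Y Z by auto
  show "g X (lie Y Z) = g (lie Y Z) X" using g_sym[OF X L[OF Y Z]] .
  show "g Y (lie Z X) = g (lie Z X) Y" using g_sym[OF Y L[OF Z X]] .
  show "g Z (lie X Y) = g (lie X Y) Z" using g_sym[OF Z L[OF X Y]] .
  show "g X (lie Z Y) = (\<lambda>p. - g (lie Y Z) X p)"
    using g_sym[OF X L[OF Z Y]] g_neg1[OF L[OF Y Z] L[OF Z Y] X lie_anti] by simp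
  show "g Y (lie X Z) = (\<lambda>p. - g (lie Z X) Y p)"
    using g_sym[OF Y L[OF X Z]] g_neg1[OF L[OF Z X] L[OF X Z] Y lie_anti] by simp
  show "g Z (lie Y X) = (\<lambda>p. - g (lie X Y) Z p)"
    using g_sym[OF Z L[OF Y X]] g_neg1[OF L[OF X Y] L[OF Y X] Z lie_anti] by simp
qed

lemma K_M: assumes X: "VF X" and Y: "VF Y" and Z: "VF Z"
  shows "K X Y Z p + K X Z Y p = X (g Y Z) p"
  by (simp add: koszul_def g_rewr[OF X Y Z] field_simps)

lemma K_T: assumes X: "VF X" and Y: "VF Y" and Z: "VF Z"
  shows "K X Y Z p - K Y X Z p = g (lie X Y) Z p"
  by (simp add: koszul_def g_rewr[OF X Y Z] field_simps)

end



context SR begin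

abbreviation "RR \<equiv> riemann MT A g"
abbreviation "FR \<equiv> flat_rep MT A g"

lemma AB_K: "VF X \<Longrightarrow> VF Y \<Longrightarrow> AB (K X Y)"
  using sr unfolding semi_regular_def radical_stationary_def by blast

lemma ab_smooth: "AB \<omega> \<Longrightarrow> VF Z \<Longrightarrow> SF (\<omega> Z)"
  unfolding Abullet_def by blast

lemma ab_rep: assumes "AB \<omega>" "p \<in> topspace MT"
  shows "VF (FR \<omega> p) \<and> (\<forall>Z. VF Z \<longrightarrow> \<omega> Z p = g (FR \<omega> p) Z p)"
proof -
  have "\<exists>U. VF U \<and> (\<forall>Z. VF Z \<longrightarrow> \<omega> Z p = g U Z p)"
    using assms unfolding Abullet_def by blast
  then show ?thesis unfolding flat_rep_def by (rule someI_ex)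
qed

lemma bi_eval: assumes o: "AB \<omega>" and t: "AB \<tau>" and p: "p \<in> topspace MT"
  shows "BI \<omega> \<tau> p = \<omega> (FR \<tau> p) p"
  using ab_rep[OF o p] ab_rep[OF t p] p by (simp add: bullet_inner_def)

lemma bi_sym: assumes o: "AB \<omega>" and t: "AB \<tau>"
  shows "BI \<omega> \<tau> p = BI \<tau> \<omega> p"
proof (cases "p \<in> topspace MT")
  case True
  then show ?thesis using ab_rep[OF o True] ab_rep[OF t True] g_sym
    by (simp add: bullet_inner_def)
qed (simp add: bullet_inner_def)

lemma bi_diff: assumes o: "AB \<omega>" and t1: "AB \<tau>1" and t2: "AB \<tau>2" and W: "VF W"
  and h: "\<And>V. VF V \<Longrightarrow> \<tau>1 V p - \<tau>2 V p = g W V p"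
  shows "BI \<omega> \<tau>1 p - BI \<omega> \<tau>2 p = \<omega> W p"
proof (cases "p \<in> topspace MT")
  case True
  note r = ab_rep[OF o True]
  have "BI \<omega> \<tau>1 p - BI \<omega> \<tau>2 p = \<tau>1 (FR \<omega> p) p - \<tau>2 (FR \<omega> p) p"
    using bi_sym[OF o t1, of p] bi_sym[OF o t2, of p] bi_eval[OF t1 o True] bi_eval[OF t2 o True] by simp
  also have "\<dots> = g W (FR \<omega> p) p" using h r by blast
  also have "\<dots> = g (FR \<omega> p) W p" using g_sym[OF W] r by simp
  also have "\<dots> = \<omega> W p" using r W by simp
  finally show ?thesis .
next
  case False
  then show ?thesis using SF_off[OF ab_smooth[OF o W] False] by (simp add: bullet_inner_def)
qed

lemma R_eq: "RR X Y Z T p = X (K Y Z T) p - BI (K X T) (K Y Z) p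
    - (Y (K X Z T) p - BI (K Y T) (K X Z) p) - K (lie X Y) Z T p"
  by (simp add: riemann_def nabla_form_def)

lemma lie_negR: assumes T: "VF T" and W: "VF W" and W': "VF W'" and n: "\<And>u p. W' u p = - W u p"
  shows "lie T W' u p = - lie T W u p"
proof (cases "SF u")
  case True
  have e: "W' u = (\<lambda>p. - W u p)" using n by (intro ext) simp
  show ?thesis unfolding lie_def e vf_neg[OF T vf_smooth[OF W True]] using n by simp
next
  case False
  have e: "W' u = W u" using vf_ns[OF W False] vf_ns[OF W' False] by simp
  show ?thesis unfolding lie_def e using vf_ns[OF W False] vf_zero[OF T] n by simp
qed

lemma lie_negL: assumes Z: "VF Z" and W: "VF W" and W': "VF W'" and n: "\<And>u p. W' u p = - W u p"
  shows "lie W' Z u p = - lie W Z u p"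
proof (cases "SF u")
  case True
  have e: "W' u = (\<lambda>p. - W u p)" using n by (intro ext) simp
  show ?thesis unfolding lie_def e vf_neg[OF Z vf_smooth[OF W True]] using n by simp
next
  case False
  have e: "W' u = W u" using vf_ns[OF W False] vf_ns[OF W' False] by simp
  show ?thesis unfolding lie_def e using vf_ns[OF W False] vf_zero[OF Z] n by simp
qed

lemma K_neg: assumes W: "VF W" and W': "VF W'" and Z: "VF Z" and T: "VF T"
  and n: "\<And>u p. W' u p = - W u p"
  shows "K W' Z T p = - K W Z T p"
proof -
  have a: "W' (g Z T) p = - W (g Z T) p" using n .
  have b: "g T W' = (\<lambda>p. - g T W p)"
    using g_sym[OF T W'] g_neg1[OF W W' T n] g_sym[OF W T] by simp
  have b2: "Z (g T W') p = - Z (g T W) p"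
    unfolding b vf_neg[OF Z g_smooth[OF T W]] by simp
  have c: "g W' Z = (\<lambda>p. - g W Z p)" using g_neg1[OF W W' Z n] .
  have c2: "T (g W' Z) p = - T (g W Z) p"
    unfolding c vf_neg[OF T g_smooth[OF W Z]] by simp
  have d: "g W' (lie Z T) p = - g W (lie Z T) p"
    using g_neg1[OF W W' lie_vf[OF Z T] n] by simp
  have e: "g Z (lie T W') p = - g Z (lie T W) p"
    using g_sym[OF Z lie_vf[OF T W']] g_sym[OF Z lie_vf[OF T W]]
      g_neg1[OF lie_vf[OF T W] lie_vf[OF T W'] Z lie_negR[OF T W W' n]] by simp
  have f: "g T (lie W' Z) p = - g T (lie W Z) p"
    using g_sym[OF T lie_vf[OF W' Z]] g_sym[OF T lie_vf[OF W Z]]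
      g_neg1[OF lie_vf[OF W Z] lie_vf[OF W' Z] T lie_negL[OF Z W W' n]] by simp
  show ?thesis unfolding koszul_def using a b2 c2 d e f by (simp add: field_simps)
qed

lemma lie_lie: assumes X: "VF X" and Y: "VF Y" and Z: "VF Z" and u: "SF u"
  shows "lie X (lie Y Z) u p = X (Y (Z u)) p - X (Z (Y u)) p - (Y (Z (X u)) p - Z (Y (X u)) p)"
proof -
  have "X (\<lambda>p. Y (Z u) p - Z (Y u) p) = (\<lambda>p. X (Y (Z u)) p - X (Z (Y u)) p)"
    by (rule vf_diff[OF X vf_smooth[OF Y vf_smooth[OF Z u]] vf_smooth[OF Z vf_smooth[OF Y u]]])
  then show ?thesis by (simp add: lie_def)
qed

lemma jacobi: assumes X: "VF X" and Y: "VF Y" and Z: "VF Z" and T: "VF T"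
  shows "g (lie X (lie Y Z)) T p + g (lie Y (lie Z X)) T p + g (lie Z (lie X Y)) T p = 0"
proof -
  note L = lie_vf
  have J1: "VF (lie X (lie Y Z))" "VF (lie Y (lie Z X))" "VF (lie Z (lie X Y))"
    using L X Y Z by blast+
  have op: "(\<lambda>u p. (\<lambda>u p. lie X (lie Y Z) u p + lie Y (lie Z X) u p) u p + lie Z (lie X Y) u p) = (\<lambda>u p. 0)"
  proof (intro ext)
    fix u p
    show "(\<lambda>u p. lie X (lie Y Z) u p + lie Y (lie Z X) u p) u p + lie Z (lie X Y) u p = 0"
    proof (cases "SF u")
      case True
      then show ?thesis using lie_lie[OF X Y Z True] lie_lie[OF Y Z X True] lie_lie[OF Z X Y True] by simp
    next
      case False
      then show ?thesis using vf_ns[OF J1(1) False] vf_ns[OF J1(2) False] vf_ns[OF J1(3) False] by simp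
    qed
  qed
  have "g (\<lambda>u p. (\<lambda>u p. lie X (lie Y Z) u p + lie Y (lie Z X) u p) u p + lie Z (lie X Y) u p) T
      = (\<lambda>p. g (\<lambda>u p. lie X (lie Y Z) u p + lie Y (lie Z X) u p) T p + g (lie Z (lie X Y)) T p)"
    by (rule g_add1[OF vf_plus[OF J1(1) J1(2)] J1(3) T])
  also have "\<dots> = (\<lambda>p. g (lie X (lie Y Z)) T p + g (lie Y (lie Z X)) T p + g (lie Z (lie X Y)) T p)"
    unfolding g_add1[OF J1(1) J1(2) T] ..
  finally show ?thesis unfolding op g_zero1[OF T] by (metis (mono_tags))
qed


lemma R1: assumes X: "VF X" and Y: "VF Y" and Z: "VF Z" and T: "VF T"
  shows "RR X Y Z T p = - RR Y X Z T p"
  using R_eq[of X Y Z T p] R_eq[of Y X Z T p]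
    K_neg[OF lie_vf[OF X Y] lie_vf[OF Y X] Z T lie_anti, of p] by simp

lemma R2: assumes X: "VF X" and Y: "VF Y" and Z: "VF Z" and T: "VF T"
  shows "RR X Y Z T p = - RR X Y T Z p"
proof -
  have s: "SF (K Y Z T)" "SF (K Y T Z)" "SF (K X Z T)" "SF (K X T Z)"
    using ab_smooth AB_K X Y Z T by blast+
  have k1: "(\<lambda>p. K Y Z T p + K Y T Z p) = Y (g Z T)" using K_M[OF Y Z T] by (intro ext) simp
  have k2: "(\<lambda>p. K X Z T p + K X T Z p) = X (g Z T)" using K_M[OF X Z T] by (intro ext) simp
  have e1: "X (K Y Z T) p + X (K Y T Z) p = X (Y (g Z T)) p"
    using vf_add[OF X s(1) s(2)] unfolding k1 by simp
  have e2: "Y (K X Z T) p + Y (K X T Z) p = Y (X (g Z T)) p"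
    using vf_add[OF Y s(3) s(4)] unfolding k2 by simp
  have e3: "K (lie X Y) Z T p + K (lie X Y) T Z p = X (Y (g Z T)) p - Y (X (g Z T)) p"
    using K_M[OF lie_vf[OF X Y] Z T, of p] by (simp add: lie_def)
  have b1: "BI (K X Z) (K Y T) p = BI (K Y T) (K X Z) p" by (rule bi_sym[OF AB_K AB_K]) (use X Y Z T in auto)
  have b2: "BI (K Y Z) (K X T) p = BI (K X T) (K Y Z) p" by (rule bi_sym[OF AB_K AB_K]) (use X Y Z T in auto)
  show ?thesis using R_eq[of X Y Z T p] R_eq[of X Y T Z p] e1 e2 e3 b1 b2 by simp
qed

lemma R3_group: assumes X: "VF X" and Y: "VF Y" and Z: "VF Z" and T: "VF T"
  shows "X (K Y Z T) p - X (K Z Y T) p - K (lie Y Z) X T p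
     - (BI (K X T) (K Y Z) p - BI (K X T) (K Z Y) p) = g (lie X (lie Y Z)) T p"
proof -
  note L = lie_vf[OF Y Z]
  have s: "SF (K Y Z T)" "SF (K Z Y T)" using ab_smooth AB_K Y Z T by blast+
  have k: "(\<lambda>p. K Y Z T p - K Z Y T p) = g (lie Y Z) T" using K_T[OF Y Z T] by (intro ext) simp
  have d: "X (K Y Z T) p - X (K Z Y T) p = X (g (lie Y Z) T) p"
    using vf_diff[OF X s] unfolding k by simp
  have b: "BI (K X T) (K Y Z) p - BI (K X T) (K Z Y) p = K X T (lie Y Z) p"
    by (rule bi_diff[OF AB_K[OF X T] AB_K[OF Y Z] AB_K[OF Z Y] L K_T[OF Y Z]])
  have m: "K X T (lie Y Z) p + K X (lie Y Z) T p = X (g (lie Y Z) T) p"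
    using K_M[OF X T L, of p] g_sym[OF T L] by simp
  have t: "K X (lie Y Z) T p - K (lie Y Z) X T p = g (lie X (lie Y Z)) T p"
    by (rule K_T[OF X L T])
  show ?thesis using d b m t by simp
qed

lemma R3: assumes X: "VF X" and Y: "VF Y" and Z: "VF Z" and T: "VF T"
  shows "RR Y Z X T p + RR Z X Y T p + RR X Y Z T p = 0"
  using R_eq[of Y Z X T p] R_eq[of Z X Y T p] R_eq[of X Y Z T p]
    R3_group[OF X Y Z T, of p] R3_group[OF Y Z X T, of p] R3_group[OF Z X Y T, of p]
    jacobi[OF X Y Z T, of p] by simp


lemma R4: assumes X: "VF X" and Y: "VF Y" and Z: "VF Z" and T: "VF T"
  shows "RR X Y Z T p = RR Z T X Y p"
  using R3[OF X Y Z T, of p]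
    R3[OF Y Z T X, of p]
    R3[OF Z T X Y, of p]
    R3[OF T X Y Z, of p]
    R1[OF Z X Y T, of p]
    R2[OF Z T X Y, of p]
    R1[OF T Y Z X, of p]
    R2[OF Y T Z X, of p]
    R2[OF Y Z X T, of p]
    R1[OF T X Z Y, of p]
    R2[OF X T Z Y, of p]
    R2[OF X Z Y T, of p]
    R2[OF X Y Z T, of p]
    R1[OF T X Y Z, of p] by linarith

end

theorem proposition7p7:
  fixes MT :: "'p topology"
    and A :: "('p set \<times> ('p \<Rightarrow> 'e::euclidean_space)) set"
    and g :: "'p vfield \<Rightarrow> 'p vfield \<Rightarrow> 'p \<Rightarrow> real"
    and X Y Z T :: "'p vfield"
  assumes "smooth_manifold MT A"
    and "sym_bilinear_form MT A g"
    and "semi_regular MT A g"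
    and "vector_field MT A X" and "vector_field MT A Y"
    and "vector_field MT A Z" and "vector_field MT A T"
  shows "riemann MT A g X Y Z T = (\<lambda>p. - riemann MT A g Y X Z T p)
    \<and> riemann MT A g X Y Z T = (\<lambda>p. - riemann MT A g X Y T Z p)
    \<and> (\<lambda>p. riemann MT A g Y Z X T p + riemann MT A g Z X Y T p + riemann MT A g X Y Z T p)
         = (\<lambda>p. 0)
    \<and> riemann MT A g X Y Z T = riemann MT A g Z T X Y"
proof -
  interpret SR MT A g using assms(1-3) by unfold_locales
  have 1: "riemann MT A g X Y Z T = (\<lambda>p. - riemann MT A g Y X Z T p)"
    by (rule ext) (rule R1[OF assms(4-7)])
  have 2: "riemann MT A g X Y Z T = (\<lambda>p. - riemann MT A g X Y T Z p)"
    by (rule ext) (rule R2[OF assms(4-7)])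
  have 3: "(\<lambda>p. riemann MT A g Y Z X T p + riemann MT A g Z X Y T p + riemann MT A g X Y Z T p)
         = (\<lambda>p. 0)"
    by (rule ext) (rule R3[OF assms(4-7)])
  have 4: "riemann MT A g X Y Z T = riemann MT A g Z T X Y"
    by (rule ext) (rule R4[OF assms(4-7)])
  show ?thesis using 1 2 3 4 by blast
qed

end
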